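(* Let $n\ge 2$ and let $S=\{A_1,\dots,A_m\}$ be a finite set of real $n\times n$ matrices such that every $A\in S$ satisfies $A\mathbf{1}=\mathbf{1}$ and $\|Ax\|_{\mathcal{P}}\le\|x\|_{\mathcal{P}}$ for all $x$. Then the switched system $x(t+1)=A_{\sigma(t)}x(t)$ converges to a multiple of $\mathbf{1}$ for every initial condition $x(0)=x_0\in\mathbb{R}^n$ and every sequence $\sigma:\mathbb{N}\to\{1,\dots,m\}$ if and only if the self-loop of node 1 is the only cycle in the graph of faces $\mathcal{G}$ of $S$.
   Context: $\mathbf{1}=(1,\dots,1)^\top$, $\|x\|_{\mathcal{P}}=\tfrac12(\max_i x_i-\min_i x_i)$, $\mathcal{P}=\{x:\|x\|_{\mathcal{P}}\le 1\}$, which satisfies $\mathcal{P}=-\mathcal{P}$. A face of a polyhedron $\mathcal{Q}$ is a non-empty subset $F$ with $F=\mathcal{Q}$ or $F=\mathcal{Q}\cap\{x:b^\top x=c\}$ where $b^\top x\le c$ on $\mathcal{Q}$; an open face is the relative interior of a face; a proper open face is the relative interior of a face other than $\mathcal{Q}$. If $F$ is a proper open face of $\mathcal{P}$, so is $-F$, and $\pm F$ denotes $F\cup(-F)$. The graph of faces $\mathcal{G}$ is the directed graph with one node for each pair $\{F,-F\}$ of opposite proper open faces of $\mathcal{P}$ and one additional node, "node 1", representing $\operatorname{int}(\mathcal{P})$; there is an edge from the node of $F_i$ to the node of $F_j$ whenever some $A\in S$ satisfies $AF_i\subseteq\pm F_j$ (self-loops allowed), an edge from the node of $F_i$ to node 1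 whenever some $A\in S$ satisfies $AF_i\subseteq\operatorname{int}(\mathcal{P})$, and a self-loop at node 1. *)

theory Defs
  imports "HOL-Analysis.Analysis"
begin

definition ones :: "real ^ 'n" where
  "ones = vec 1"

definition normP :: "real ^ 'n \<Rightarrow> real" where
  "normP x = (Max (range (\<lambda>i. x $ i)) - Min (range (\<lambda>i. x $ i))) / 2"

definition Pset :: "(real ^ 'n) set" where
  "Pset = {x. normP x \<le> 1}"

definition is_face :: "(real ^ 'n) set \<Rightarrow> (real ^ 'n) set \<Rightarrow> bool" where
  "is_face Q F \<longleftrightarrow> F \<noteq> {} \<and>
     (F = Q \<or> (\<exists>b c. (\<forall>x\<in>Q. inner b x \<le> c) \<and> F = Q \<inter> {x. inner b x = c}))"

definition proper_open_face :: "(real ^ 'n) set \<Rightarrow> bool" where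
  "proper_open_face G \<longleftrightarrow> (\<exists>F. is_face Pset F \<and> F \<noteq> Pset \<and> G = rel_interior F)"

text \<open>Nodes of the graph of faces: None is node 1 (interior of P),
  Some {F, -F} is the node of the pair of opposite proper open faces.\<close>
definition face_node :: "(real ^ 'n) set \<Rightarrow> (real ^ 'n) set set option" where
  "face_node F = Some {F, uminus ` F}"

definition graph_of_faces ::
  "(real ^ 'n ^ 'n) set \<Rightarrow> ((real ^ 'n) set set option \<times> (real ^ 'n) set set option) set" where
  "graph_of_faces S =
     {(face_node Fi, face_node Fj) | Fi Fj. proper_open_face Fi \<and> proper_open_face Fj \<and>
        (\<exists>A\<in>S. (\<lambda>x. A *v x) ` Fi \<subseteq> Fj \<union> uminus ` Fj)}
   \<union> {(face_node Fi, None) | Fi. proper_open_face Fi \<and>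
        (\<exists>A\<in>S. (\<lambda>x. A *v x) ` Fi \<subseteq> interior Pset)}
   \<union> {(None, None)}"

definition only_cycle_is_node1_loop :: "(real ^ 'n ^ 'n) set \<Rightarrow> bool" where
  "only_cycle_is_node1_loop S \<longleftrightarrow> (\<forall>v. (v, v) \<in> (graph_of_faces S)\<^sup>+ \<longrightarrow> v = None)"

primrec traj :: "(nat \<Rightarrow> real ^ 'n ^ 'n) \<Rightarrow> real ^ 'n \<Rightarrow> nat \<Rightarrow> real ^ 'n" where
  "traj \<sigma> x0 0 = x0"
| "traj \<sigma> x0 (Suc t) = \<sigma> t *v traj \<sigma> x0 t"

end

theory Submission
  imports Defs
begin

definition mx :: "real^'n \<Rightarrow> real" where "mx x = Max (range (\<lambda>i. x $ i))"
definition mn :: "real^'n \<Rightarrow> real" where "mn x = Min (range (\<lambda>i. x $ i))"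

lemma normP_mx: "normP x = (mx x - mn x) / 2"
  by (simp add: normP_def mx_def mn_def)

lemma mx_ge: "x $ i \<le> mx x"
  unfolding mx_def by (rule Max_ge) auto
lemma mn_le: "mn x \<le> x $ i"
  unfolding mn_def by (rule Min_le) auto
lemma mx_ex: "\<exists>i. x $ i = mx x"
proof -
  have "mx x \<in> range (\<lambda>i. x $ i)" unfolding mx_def by (rule Max_in) auto
  thus ?thesis by auto
qed
lemma mn_ex: "\<exists>i. x $ i = mn x"
proof -
  have "mn x \<in> range (\<lambda>i. x $ i)" unfolding mn_def by (rule Min_in) auto
  thus ?thesis by auto
qed
lemma mx_eqI: "(\<And>i. x $ i \<le> m) \<Longrightarrow> x $ j = m \<Longrightarrow> mx x = m"
  by (metis antisym mx_ex mx_ge)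
lemma mn_eqI: "(\<And>i. m \<le> x $ i) \<Longrightarrow> x $ j = m \<Longrightarrow> mn x = m"
  by (metis antisym mn_ex mn_le)

lemma normP_ge0: "normP x \<ge> 0"
  using mx_ge[of x undefined] mn_le[of x undefined] by (simp add: normP_mx)

lemma diff_le_normP: "x $ i - x $ j \<le> 2 * normP x"
  using mx_ge[of x i] mn_le[of x j] by (simp add: normP_mx)

lemma normP_le_iff: "normP x \<le> r \<longleftrightarrow> (\<forall>i j. x $ i - x $ j \<le> 2 * r)"
proof
  assume "\<forall>i j. x $ i - x $ j \<le> 2 * r"
  moreover obtain i j where "x $ i = mx x" "x $ j = mn x" using mx_ex mn_ex by metis
  ultimately have "mx x - mn x \<le> 2 * r" by metis
  then show "normP x \<le> r" by (simp add: normP_mx)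
next
  assume "normP x \<le> r"
  then show "\<forall>i j. x $ i - x $ j \<le> 2 * r" using diff_le_normP[of x] by (smt (verit))
qed

lemma normP_neg: "normP (- x) = normP x"
proof -
  obtain i j where ij: "x $ i = mx x" "x $ j = mn x" using mx_ex mn_ex by metis
  have "mx (-x) = - mn x" by (rule mx_eqI[of _ _ j]) (use ij mn_le in auto)
  moreover have "mn (-x) = - mx x" by (rule mn_eqI[of _ _ i]) (use ij mx_ge in auto)
  ultimately show ?thesis by (simp add: normP_mx)
qed

lemma normP_affine: "c \<ge> 0 \<Longrightarrow> normP (c *\<^sub>R x + d *\<^sub>R ones) = c * normP x"
proof -
  assume c: "c \<ge> 0"
  obtain i j where ij: "x $ i = mx x" "x $ j = mn x" using mx_ex mn_ex by metis
  have "mx (c *\<^sub>R x + d *\<^sub>R ones) = c * mx x + d"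
    by (rule mx_eqI[of _ _ i]) (use c ij mx_ge in \<open>auto simp: ones_def intro: mult_left_mono\<close>)
  moreover have "mn (c *\<^sub>R x + d *\<^sub>R ones) = c * mn x + d"
    by (rule mn_eqI[of _ _ j]) (use c ij mn_le in \<open>auto simp: ones_def intro: mult_left_mono\<close>)
  ultimately show ?thesis by (simp add: normP_mx algebra_simps)
qed

lemma normP_add_ones: "normP (x + d *\<^sub>R ones) = normP x"
  using normP_affine[of 1 x d] by simp

lemma normP_scale: "c \<ge> 0 \<Longrightarrow> normP (c *\<^sub>R x) = c * normP x"
  using normP_affine[of c x 0] by simp

lemma normP_zero_iff: "normP x = 0 \<longleftrightarrow> x = (x $ k) *\<^sub>R ones"
proof
  assume "normP x = 0"
  then have "\<forall>i j. x $ i - x $ j \<le> 0" using normP_le_iff[of x 0] by simp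
  then have "x $ i = x $ k" for i by (metis antisym diff_le_0_iff_le)
  then show "x = (x $ k) *\<^sub>R ones" by (simp add: vec_eq_iff ones_def)
next
  assume "x = (x $ k) *\<^sub>R ones"
  have "normP ((0::real) *\<^sub>R x + (x $ k) *\<^sub>R ones) = 0 * normP x" by (rule normP_affine) simp
  then show "normP x = 0" using \<open>x = (x $ k) *\<^sub>R ones\<close> by simp
qed

lemma normP_lipschitz: fixes x y :: "real^'n" shows "\<bar>normP x - normP y\<bar> \<le> norm (x - y)"
proof -
  have c: "\<bar>x $ i - y $ i\<bar> \<le> norm (x - y)" for i :: 'n and x y :: "real^'n"
    by (metis component_le_norm_cart vector_minus_component)
  have a: "mx x \<le> mx y + norm (x - y)" for x y :: "real^'n"
  proof -
    obtain i where "x $ i = mx x" using mx_ex by metis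
    then show ?thesis using c[of x i y] mx_ge[of y i] by linarith
  qed
  have b: "mn y \<le> mn x + norm (x - y)" for x y :: "real^'n"
  proof -
    obtain i where "x $ i = mn x" using mn_ex by metis
    then show ?thesis using c[of x i y] mn_le[of y i] by linarith
  qed
  have nc: "norm (y - x) = norm (x - y)" by (rule norm_minus_commute)
  have h1: "mx x - mx y \<le> norm (x - y)" using a[where x=x and y=y] by linarith
  have h2: "mx y - mx x \<le> norm (x - y)" using a[where x=y and y=x] nc by linarith
  have h3: "mn x - mn y \<le> norm (x - y)" using b[where x=y and y=x] nc by linarith
  have h4: "mn y - mn x \<le> norm (x - y)" using b[where x=x and y=y] by linarith
  have "normP x - normP y = ((mx x - mx y) - (mn x - mn y)) / 2" unfolding normP_mx by argo
  then show ?thesis using h1 h2 h3 h4 by (simp add: abs_le_iff)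
qed

lemma continuous_normP: "continuous_on U normP"
proof (rule continuous_on_iff[THEN iffD2], intro ballI allI impI)
  fix x e assume "(e::real) > 0"
  then show "\<exists>d>0. \<forall>x'\<in>U. dist x' x < d \<longrightarrow> dist (normP x') (normP x) < e"
    by (intro exI[of _ e]) (auto simp: dist_norm intro: le_less_trans[OF normP_lipschitz])
qed

lemma isCont_normP: "isCont normP x"
  using continuous_normP[of UNIV] continuous_on_eq_continuous_at by blast

lemma Pset_iff: "x \<in> Pset \<longleftrightarrow> (\<forall>i j. x $ i - x $ j \<le> 2)"
  unfolding Pset_def using normP_le_iff[of x 1] by simp

lemma Pset_Inter: "Pset = \<Inter> ((\<lambda>(i,j). {x. (axis i 1 - axis j 1) \<bullet> x \<le> (2::real)}) ` UNIV)"
  by (auto simp: Pset_iff inner_diff_left inner_axis')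

lemma polyhedron_Pset: "polyhedron Pset"
  unfolding Pset_Inter by (rule polyhedron_Inter) (auto intro: polyhedron_halfspace_le)

lemma convex_Pset: "convex Pset"
  using polyhedron_Pset polyhedron_imp_convex by blast

lemma interior_Pset: "interior Pset = {x. normP x < 1}"
proof
  have "open {x. normP x < 1}"
    by (rule open_Collect_less) (use continuous_normP in auto)
  then show "{x. normP x < 1} \<subseteq> interior Pset"
    by (rule interior_maximal[rotated]) (auto simp: Pset_def)
next
  show "interior Pset \<subseteq> {x. normP x < 1}"
  proof
    fix x :: "real^'n" assume x: "x \<in> interior Pset"
    then obtain e where e: "e > 0" "ball x e \<subseteq> Pset" using mem_interior by blast
    have xP: "normP x \<le> 1" using x interior_subset[of Pset] by (auto simp: Pset_def)
    show "x \<in> {x. normP x < 1}"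
    proof (rule ccontr)
      assume "x \<notin> {x. normP x < 1}"
      then have n1: "normP x = 1" using xP by simp
      obtain i j where ij: "x $ i = mx x" "x $ j = mn x" using mx_ex mn_ex by metis
      have d: "x $ i - x $ j = 2" using n1 ij by (simp add: normP_mx)
      then have "i \<noteq> j" by auto
      define y where "y = x + (e/2) *\<^sub>R axis i 1"
      have "dist x y = e/2" using e by (simp add: y_def dist_norm)
      then have "dist x y < e" using e by simp
      then have "y \<in> Pset" using e by auto
      then have "y $ i - y $ j \<le> 2" by (simp add: Pset_iff)
      moreover have "y $ i - y $ j = 2 + e/2" using d \<open>i \<noteq> j\<close> by (simp add: y_def axis_def)
      ultimately show False using e by simp
    qed
  qed
qed

lemma rel_interior_Pset: "rel_interior Pset = interior Pset"
proof -
  have "normP (0::real^'a) = 0" using normP_scale[of 0 "0::real^'a"] by simp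
  then have "(0::real^'a) \<in> interior Pset" unfolding interior_Pset by simp
  then show ?thesis by (intro rel_interior_nonempty_interior) auto
qed

lemma face_in_rel_interior:
  fixes P :: "'a::euclidean_space set"
  assumes P: "polyhedron P" and x: "x \<in> P"
  shows "\<exists>F. F face_of P \<and> x \<in> rel_interior F"
proof -
  define F0 where "F0 = \<Inter>{F. F face_of P \<and> x \<in> F}"
  have PP: "P face_of P" using P polyhedron_imp_convex face_of_refl by blast
  have F0: "F0 face_of P" unfolding F0_def by (rule face_of_Inter) (use PP x in auto)
  have xF0: "x \<in> F0" unfolding F0_def by auto
  have "x \<in> rel_interior F0"
  proof (rule ccontr)
    assume "x \<notin> rel_interior F0"
    moreover have pF0: "polyhedron F0" using face_of_polyhedron_polyhedron[OF P F0] .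
    ultimately have "x \<in> \<Union>{G. G facet_of F0}" using xF0 rel_boundary_of_polyhedron[OF pF0] by (metis DiffI)
    then obtain G where G: "G facet_of F0" "x \<in> G" by blast
    then have "G face_of P" using face_of_trans[OF facet_of_imp_face_of[OF G(1)] F0] by simp
    then have "F0 \<subseteq> G" using G(2) unfolding F0_def by (intro Inter_lower) simp
    then have "G = F0" using facet_of_imp_subset[OF G(1)] by (rule antisym[rotated])
    then show False using G by simp
  qed
  then show ?thesis using F0 by blast
qed

lemma image_face:
  fixes P :: "'a::euclidean_space set"
  assumes P: "polyhedron P" and f: "linear f" and fP: "f ` P \<subseteq> P"
    and F: "F face_of P" "F \<noteq> {}"
  shows "\<exists>F'. F' face_of P \<and> F' \<noteq> {} \<and> f ` rel_interior F \<subseteq> rel_interior F'"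
proof -
  have cF: "convex F" using F face_of_imp_convex by blast
  define C where "C = f ` rel_interior F"
  have C: "C = rel_interior (f ` F)" unfolding C_def by (rule rel_interior_convex_linear_image[OF f cF])
  have cfF: "convex (f ` F)" using cF f convex_linear_image by blast
  have rC: "rel_interior C = C" unfolding C using rel_interior_rel_interior[OF cfF] .
  have "f ` rel_interior F \<subseteq> f ` P"
    using rel_interior_subset[of F] face_of_imp_subset[OF F(1)] by (intro image_mono) (rule subset_trans)
  then have CP: "C \<subseteq> P" unfolding C_def using fP by (rule subset_trans)
  have "rel_interior F \<noteq> {}" using rel_interior_eq_empty[OF cF] F by blast
  then obtain y where y: "y \<in> C" unfolding C_def by blast
  obtain F' where F': "F' face_of P" "y \<in> rel_interior F'" using face_in_rel_interior[OF P] y CP by blast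
  have "y \<in> F' \<inter> rel_interior C" using y rC F'(2) rel_interior_subset[of F'] by auto
  then have CF': "C \<subseteq> F'" using subset_of_face_of[OF F'(1) CP] by auto
  have "C \<subseteq> rel_interior F'"
  proof
    fix z assume z: "z \<in> C"
    obtain F'' where F'': "F'' face_of P" "z \<in> rel_interior F''" using face_in_rel_interior[OF P] z CP by blast
    have "z \<in> F'' \<inter> rel_interior C" using z rC F''(2) rel_interior_subset[of F''] by auto
    then have CF'': "C \<subseteq> F''" using subset_of_face_of[OF F''(1) CP] by auto
    have "y \<in> F'' \<inter> rel_interior F'" using CF'' y F'(2) by auto
    then have "F' \<subseteq> F''" using subset_of_face_of[OF F''(1) face_of_imp_subset[OF F'(1)]] by auto
    moreover have "z \<in> F' \<inter> rel_interior F''" using CF' z F''(2) by auto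
    then have "F'' \<subseteq> F'" using subset_of_face_of[OF F'(1) face_of_imp_subset[OF F''(1)]] by auto
    ultimately have "F' = F''" by blast
    then show "z \<in> rel_interior F'" using F'' by simp
  qed
  moreover have "F' \<noteq> {}" using F'(2) rel_interior_subset[of F'] by auto
  ultimately show ?thesis using F'(1) unfolding C_def by blast
qed

lemma is_face_iff: "is_face Pset F \<longleftrightarrow> F \<noteq> {} \<and> F face_of Pset"
proof
  assume "is_face Pset F"
  then have ne: "F \<noteq> {}" and h: "F = Pset \<or> (\<exists>b c. (\<forall>x\<in>Pset. inner b x \<le> c) \<and> F = Pset \<inter> {x. inner b x = c})"
    unfolding is_face_def by auto
  from h have "F face_of Pset"
  proof
    assume "F = Pset" then show ?thesis using face_of_refl[OF convex_Pset] by simp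
  next
    assume "\<exists>b c. (\<forall>x\<in>Pset. inner b x \<le> c) \<and> F = Pset \<inter> {x. inner b x = c}"
    then obtain b c where "\<forall>x\<in>Pset. inner b x \<le> c" "F = Pset \<inter> {x. inner b x = c}" by blast
    then show ?thesis using exposed_face_of_Int_supporting_hyperplane_le[OF convex_Pset, of b c]
      unfolding exposed_face_of_def by auto
  qed
  then show "F \<noteq> {} \<and> F face_of Pset" using ne by simp
next
  assume "F \<noteq> {} \<and> F face_of Pset"
  then have "F exposed_face_of Pset" "F \<noteq> {}" using exposed_face_of_polyhedron[OF polyhedron_Pset] by auto
  then show "is_face Pset F" unfolding is_face_def exposed_face_of_def by blast
qed

lemma pof_iff: "proper_open_face G \<longleftrightarrow> (\<exists>F. F face_of Pset \<and> F \<noteq> {} \<and> F \<noteq> Pset \<and> G = rel_interior F)"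
  unfolding proper_open_face_def is_face_iff by blast

lemma pof_nonempty: "proper_open_face G \<Longrightarrow> G \<noteq> {}"
  unfolding pof_iff using rel_interior_eq_empty face_of_imp_convex by blast

lemma pof_normP:
  fixes x :: "real^'n"
  assumes "proper_open_face G" "x \<in> G" shows "normP x = 1"
proof -
  obtain F where F: "F face_of Pset" "F \<noteq> Pset" "G = rel_interior F" using assms(1) unfolding pof_iff by blast
  have xF: "x \<in> F" using assms(2) F(3) rel_interior_subset by blast
  then have "x \<notin> interior Pset" using face_of_disjoint_interior[OF F(1,2)] by blast
  then have "\<not> normP x < 1" using interior_Pset by blast
  moreover have "x \<in> Pset" using xF face_of_imp_subset[OF F(1)] by blast
  then have "normP x \<le> 1" by (simp add: Pset_def)
  ultimately show ?thesis by simp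
qed

lemma pof_cover:
  fixes x :: "real^'n"
  assumes "normP x = 1" shows "\<exists>G. proper_open_face G \<and> x \<in> G"
proof -
  have xP: "x \<in> Pset" using assms by (simp add: Pset_def)
  obtain F where F: "F face_of Pset" "x \<in> rel_interior F" using face_in_rel_interior[OF polyhedron_Pset xP] by blast
  have "F \<noteq> Pset"
  proof
    assume "F = Pset"
    then have "x \<in> interior Pset" using F(2) rel_interior_Pset by metis
    then have "normP x < 1" unfolding interior_Pset by simp
    then show False using assms by simp
  qed
  moreover have "F \<noteq> {}" using F(2) rel_interior_subset by blast
  ultimately show ?thesis using F unfolding pof_iff by blast
qed

lemma Pset_mono:
  assumes "\<forall>x. normP (A *v x) \<le> normP x"
  shows "(\<lambda>x. A *v x) ` Pset \<subseteq> Pset" "(\<lambda>x. A *v x) ` interior Pset \<subseteq> interior Pset"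
proof -
  show "(\<lambda>x. A *v x) ` Pset \<subseteq> Pset" unfolding Pset_def using assms order_trans by fastforce
  have "(\<lambda>x. A *v x) ` {x. normP x < 1} \<subseteq> {x. normP x < 1}" using assms le_less_trans by fastforce
  then show "(\<lambda>x. A *v x) ` interior Pset \<subseteq> interior Pset" unfolding interior_Pset .
qed

lemma pof_step:
  fixes A :: "real^'n^'n"
  assumes A: "\<forall>x. normP (A *v x) \<le> normP x" and G: "proper_open_face G"
  shows "(\<lambda>x. A *v x) ` G \<subseteq> interior Pset \<or> (\<exists>G'. proper_open_face G' \<and> (\<lambda>x. A *v x) ` G \<subseteq> G')"
proof -
  obtain F where F: "F face_of Pset" "F \<noteq> {}" "G = rel_interior F" using G unfolding pof_iff by blast
  obtain F' where F': "F' face_of Pset" "F' \<noteq> {}" "(\<lambda>x. A *v x) ` rel_interior F \<subseteq> rel_interior F'"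
    using image_face[OF polyhedron_Pset matrix_vector_mul_linear Pset_mono(1)[OF A] F(1,2)] by blast
  show ?thesis
  proof (cases "F' = Pset")
    case True then show ?thesis using F' F(3) rel_interior_Pset by auto
  next
    case False then show ?thesis using F' F(3) unfolding pof_iff by blast
  qed
qed

lemma finite_pof: "finite {G :: (real^'n) set. proper_open_face G}"
proof -
  have "{G :: (real^'n) set. proper_open_face G} \<subseteq> rel_interior ` {F. F face_of Pset}"
    unfolding pof_iff by blast
  then show ?thesis using finite_polyhedron_faces[OF polyhedron_Pset] finite_subset by blast
qed

lemma E_from_None: "(None, v) \<in> graph_of_faces S \<Longrightarrow> v = None"
  unfolding graph_of_faces_def face_node_def by auto

lemma E_from_None_rtrancl: "(None, v) \<in> (graph_of_faces S)\<^sup>* \<Longrightarrow> v = None"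
  by (induction rule: rtrancl_induct) (auto dest: E_from_None)

lemma E_to_Some:
  assumes "(u, Some w) \<in> graph_of_faces S"
  shows "\<exists>Fi Fj. u = face_node Fi \<and> Some w = face_node Fj \<and> proper_open_face Fi \<and> proper_open_face Fj \<and>
        (\<exists>A\<in>S. (\<lambda>x. A *v x) ` Fi \<subseteq> Fj \<union> uminus ` Fj)"
  using assms unfolding graph_of_faces_def by auto

lemma E_from_Some:
  assumes "(u, v) \<in> graph_of_faces S" "u \<noteq> None"
  shows "\<exists>G. proper_open_face G \<and> u = face_node G"
  using assms unfolding graph_of_faces_def by auto

lemma face_node_eq: "face_node G = face_node F \<Longrightarrow> G = F \<or> G = uminus ` F"
  unfolding face_node_def by (auto simp: doubleton_eq_iff)

lemma mv_neg: "A *v (- x) = - (A *v (x::real^'n))"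
  using matrix_vector_mult_diff_distrib[of A 0 x] by simp

lemma normP_ones: "normP (c *\<^sub>R ones) = 0"
  using normP_affine[of 0 "0::real^'a" c] by simp

lemma necessity:
  fixes S :: "(real ^ 'n ^ 'n) set"
  assumes conv: "\<forall>x0 \<sigma>. (\<forall>t. \<sigma> t \<in> S) \<longrightarrow> (\<exists>c::real. traj \<sigma> x0 \<longlonglongrightarrow> c *\<^sub>R ones)"
  shows "only_cycle_is_node1_loop S"
  unfolding only_cycle_is_node1_loop_def
proof (intro allI impI, rule ccontr)
  fix v assume vv: "(v, v) \<in> (graph_of_faces S)\<^sup>+" and vN: "v \<noteq> None"
  let ?E = "graph_of_faces S"
  define Z where "Z = {u. u \<noteq> None \<and> (u, u) \<in> ?E\<^sup>+}"
  have succ: "\<exists>u'. (u, u') \<in> ?E \<and> u' \<in> Z" if u: "u \<in> Z" for u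
  proof -
    from u have uN: "u \<noteq> None" and uu: "(u, u) \<in> ?E\<^sup>+" unfolding Z_def by auto
    obtain u' where e: "(u, u') \<in> ?E" and r: "(u', u) \<in> ?E\<^sup>*" using tranclD[OF uu] by blast
    have "u' \<noteq> None"
    proof
      assume "u' = None"
      then have "(None, u) \<in> ?E\<^sup>*" using r by simp
      then have "u = None" by (rule E_from_None_rtrancl)
      with uN show False by simp
    qed
    moreover have "(u', u') \<in> ?E\<^sup>+" using rtrancl_into_trancl1[OF r e] .
    ultimately show ?thesis using e unfolding Z_def by blast
  qed
  define I where "I x \<longleftrightarrow> (\<exists>G. proper_open_face G \<and> face_node G \<in> Z \<and> (x \<in> G \<or> - x \<in> G))" for x :: "real^'n"
  have In: "normP x = 1" if "I x" for x
    using that pof_normP normP_neg unfolding I_def by metis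
  have Istep: "\<exists>A. A \<in> S \<and> I (A *v x)" if "I x" for x
  proof -
    obtain G where G: "proper_open_face G" "face_node G \<in> Z" "x \<in> G \<or> - x \<in> G" using \<open>I x\<close> unfolding I_def by blast
    obtain u' where u': "(face_node G, u') \<in> ?E" "u' \<in> Z" using succ[OF G(2)] by blast
    then obtain w where w: "u' = Some w" unfolding Z_def by auto
    obtain Fi Fj A where F: "face_node G = face_node Fi" "u' = face_node Fj" "proper_open_face Fi"
        "proper_open_face Fj" "A \<in> S" "(\<lambda>x. A *v x) ` Fi \<subseteq> Fj \<union> uminus ` Fj"
      using E_to_Some[of "face_node G" w S] u'(1) w by metis
    have "x \<in> Fi \<or> - x \<in> Fi" using face_node_eq[OF F(1)] G(3) by auto
    then have "A *v x \<in> Fj \<union> uminus ` Fj \<or> A *v (- x) \<in> Fj \<union> uminus ` Fj" using F(6) by blast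
    then have "A *v x \<in> Fj \<or> - (A *v x) \<in> Fj"
      by (auto simp: mv_neg image_iff)
    then have "I (A *v x)" unfolding I_def using F(2,4) u'(2) by blast
    then show ?thesis using F(5) by blast
  qed
  then have "\<forall>x. \<exists>A. I x \<longrightarrow> A \<in> S \<and> I (A *v x)" by blast
  from choice[OF this] obtain g where g: "\<And>x. I x \<Longrightarrow> g x \<in> S \<and> I (g x *v x)" by blast
  obtain G where G: "proper_open_face G" "v = face_node G"
    using E_from_Some[OF _ vN] tranclD[OF vv] by blast
  then obtain x0 where x0: "x0 \<in> G" using pof_nonempty by blast
  have I0: "I x0" unfolding I_def using G x0 vv vN unfolding Z_def by blast
  define xs where "xs = rec_nat x0 (\<lambda>_ x. g x *v x)"
  have xs0: "xs 0 = x0" and xsS: "xs (Suc t) = g (xs t) *v xs t" for t by (simp_all add: xs_def)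
  have Ixs: "I (xs t)" for t by (induction t) (use I0 g in \<open>auto simp: xs0 xsS\<close>)
  define \<sigma> where "\<sigma> t = g (xs t)" for t
  have \<sigma>S: "\<forall>t. \<sigma> t \<in> S" using Ixs g unfolding \<sigma>_def by blast
  have tr: "traj \<sigma> x0 t = xs t" for t by (induction t) (auto simp: xs0 xsS \<sigma>_def)
  obtain c where c: "traj \<sigma> x0 \<longlonglongrightarrow> c *\<^sub>R ones" using conv \<sigma>S by blast
  have "(\<lambda>t. normP (traj \<sigma> x0 t)) \<longlonglongrightarrow> normP (c *\<^sub>R (ones::real^'n))"
    using isCont_tendsto_compose[OF isCont_normP c] .
  moreover have "(\<lambda>t. normP (traj \<sigma> x0 t)) = (\<lambda>t. 1)" using tr In Ixs by auto
  ultimately have "(\<lambda>t. 1::real) \<longlonglongrightarrow> 0" by (simp add: normP_ones)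
  then show False using LIMSEQ_unique[OF tendsto_const] by fastforce
qed

lemma edge_intro:
  assumes "proper_open_face G" "proper_open_face G'" "A \<in> S" "(\<lambda>x. A *v x) ` G \<subseteq> G'"
  shows "(face_node G, face_node G') \<in> graph_of_faces S"
proof -
  have "(face_node G, face_node G') \<in> {(face_node Fi, face_node Fj) | Fi Fj. proper_open_face Fi \<and> proper_open_face Fj \<and>
        (\<exists>A\<in>S. (\<lambda>x. A *v x) ` Fi \<subseteq> Fj \<union> uminus ` Fj)}" using assms by blast
  then show ?thesis unfolding graph_of_faces_def by (rule UnI1[THEN UnI1])
qed

lemma chain_trancl:
  assumes "\<forall>k<j. (w k, w (Suc k)) \<in> R" "i < j"
  shows "(w i, w j) \<in> R\<^sup>+"
  using assms
proof (induction j)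
  case 0 then show ?case by simp
next
  case (Suc j)
  show ?case
  proof (cases "i = j")
    case True then show ?thesis using Suc.prems by auto
  next
    case False
    then have "(w i, w j) \<in> R\<^sup>+" using Suc by auto
    then show ?thesis using Suc.prems by (meson lessI trancl.trancl_into_trancl)
  qed
qed

lemma traj_antimono:
  assumes "\<forall>t<L. \<tau> t \<in> S" "\<forall>A\<in>S. \<forall>x. normP (A *v x) \<le> normP x" "t \<le> s" "s \<le> L"
  shows "normP (traj \<tau> x s) \<le> normP (traj \<tau> x t)"
  using assms(3,4)
proof (induction s)
  case 0 then show ?case by simp
next
  case (Suc s)
  show ?case
  proof (cases "t = Suc s")
    case True then show ?thesis by simp
  next
    case False
    then have "normP (traj \<tau> x s) \<le> normP (traj \<tau> x t)" using Suc by auto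
    moreover have "normP (traj \<tau> x (Suc s)) \<le> normP (traj \<tau> x s)" using assms(1,2) Suc.prems by simp
    ultimately show ?thesis by linarith
  qed
qed

lemma walk_contracts:
  fixes S :: "(real ^ 'n ^ 'n) set"
  assumes nonexp: "\<forall>A\<in>S. \<forall>x. normP (A *v x) \<le> normP x"
    and oc: "only_cycle_is_node1_loop S"
    and L: "L = card (face_node ` {G::(real^'n) set. proper_open_face G}) + 1"
    and \<tau>: "\<forall>t<L. \<tau> t \<in> S" and x: "normP x \<le> 1"
  shows "normP (traj \<tau> x L) < 1"
proof (rule ccontr)
  assume "\<not> normP (traj \<tau> x L) < 1"
  let ?V = "face_node ` {G::(real^'n) set. proper_open_face G}"
  let ?E = "graph_of_faces S"
  have one: "normP (traj \<tau> x t) = 1" if "t \<le> L" for t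
    using traj_antimono[OF \<tau> nonexp that order_refl, of x] traj_antimono[OF \<tau> nonexp _ that, of 0 x]
      \<open>\<not> normP (traj \<tau> x L) < 1\<close> x by simp
  have walk: "\<exists>w. (\<forall>i\<le>t. w i \<in> ?V) \<and> (\<forall>i<t. (w i, w (Suc i)) \<in> ?E) \<and>
      (\<exists>G. proper_open_face G \<and> w t = face_node G \<and> traj \<tau> x t \<in> G)" if "t \<le> L" for t
    using that
  proof (induction t)
    case 0
    obtain G where G: "proper_open_face G" "x \<in> G" using pof_cover one[of 0] by auto
    show ?case by (rule exI[of _ "\<lambda>_. face_node G"]) (use G in auto)
  next
    case (Suc t)
    then obtain w G where w: "\<forall>i\<le>t. w i \<in> ?V" "\<forall>i<t. (w i, w (Suc i)) \<in> ?E"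
      and G: "proper_open_face G" "w t = face_node G" "traj \<tau> x t \<in> G" by auto
    have AS: "\<tau> t \<in> S" using \<tau> Suc.prems by auto
    have nA: "\<forall>x. normP (\<tau> t *v x) \<le> normP x" using AS nonexp by blast
    have tS: "traj \<tau> x (Suc t) = \<tau> t *v traj \<tau> x t" by simp
    from pof_step[OF nA G(1)] show ?case
    proof
      assume "(\<lambda>y. \<tau> t *v y) ` G \<subseteq> interior Pset"
      then have "traj \<tau> x (Suc t) \<in> interior Pset" using G(3) tS by auto
      then have "normP (traj \<tau> x (Suc t)) < 1" unfolding interior_Pset by simp
      then show ?case using one[OF Suc.prems] by simp
    next
      assume "\<exists>G'. proper_open_face G' \<and> (\<lambda>y. \<tau> t *v y) ` G \<subseteq> G'"
      then obtain G' where G': "proper_open_face G'" "(\<lambda>y. \<tau> t *v y) ` G \<subseteq> G'" by blast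
      have e: "(face_node G, face_node G') \<in> ?E" by (rule edge_intro[OF G(1) G'(1) AS G'(2)])
      define w' where "w' = w(Suc t := face_node G')"
      have "\<forall>i\<le>Suc t. w' i \<in> ?V" using w(1) G'(1) unfolding w'_def by (auto simp: le_Suc_eq)
      moreover have "\<forall>i<Suc t. (w' i, w' (Suc i)) \<in> ?E"
        using w(2) e G(2) unfolding w'_def by (auto simp: less_Suc_eq)
      moreover have "traj \<tau> x (Suc t) \<in> G'" using G(3) G'(2) tS by auto
      moreover have "w' (Suc t) = face_node G'" unfolding w'_def by simp
      ultimately show ?case using G'(1) by (intro exI[of _ w']) blast
    qed
  qed
  obtain w where w: "\<forall>i\<le>L. w i \<in> ?V" "\<forall>i<L. (w i, w (Suc i)) \<in> ?E" using walk[of L] by auto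
  have finV: "finite ?V" using finite_pof by blast
  have "\<not> inj_on w {0..L}"
  proof
    assume "inj_on w {0..L}"
    moreover have "w ` {0..L} \<subseteq> ?V" using w(1) by auto
    ultimately have "card {0..L} \<le> card ?V" by (rule card_inj_on_le[OF _ _ finV])
    then show False using L by simp
  qed
  then obtain i j where ij: "i \<le> L" "j \<le> L" "i \<noteq> j" "w i = w j" unfolding inj_on_def by auto
  have "\<exists>i j. i < j \<and> j \<le> L \<and> w i = w j"
  proof (cases "i < j")
    case True then show ?thesis using ij by blast
  next
    case False then show ?thesis using ij by (intro exI[of _ j] exI[of _ i]) auto
  qed
  then obtain i j where ij: "i < j" "j \<le> L" "w i = w j" by blast
  have "\<forall>k<j. (w k, w (Suc k)) \<in> ?E" using w(2) ij(2) by simp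
  then have "(w i, w j) \<in> ?E\<^sup>+" using chain_trancl ij(1) by metis
  then have "(w i, w i) \<in> ?E\<^sup>+" using ij by simp
  moreover have "w i \<noteq> None" using w(1) ij unfolding face_node_def by auto
  moreover have "\<forall>v. (v, v) \<in> ?E\<^sup>+ \<longrightarrow> v = None" using oc unfolding only_cycle_is_node1_loop_def .
  ultimately show False by simp
qed

lemma traj_shift: "traj \<tau> x (s + n) = traj (\<lambda>t. \<tau> (s + t)) (traj \<tau> x s) n"
  by (induction n) auto

lemma traj_cong: "(\<forall>t<n. \<tau> t = \<tau>' t) \<Longrightarrow> traj \<tau> x n = traj \<tau>' x n"
  by (induction n) auto

lemma traj_affine:
  fixes x :: "real^'n"
  shows "(\<forall>t<n. \<tau> t *v ones = ones) \<Longrightarrow> traj \<tau> (a *\<^sub>R x + b *\<^sub>R ones) n = a *\<^sub>R traj \<tau> x n + b *\<^sub>R ones"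
  by (induction n) (auto simp: matrix_vector_right_distrib matrix_vector_mult_scaleR)

lemma traj_linear: "\<exists>M. \<forall>x. traj \<tau> (x::real^'n) n = M *v x"
proof (induction n)
  case 0 show ?case by (rule exI[of _ "mat 1"]) simp
next
  case (Suc n)
  then obtain M where "\<forall>x. traj \<tau> (x::real^'n) n = M *v x" by blast
  then show ?case by (intro exI[of _ "\<tau> n ** M"]) (simp add: matrix_vector_mul_assoc)
qed

lemma continuous_normP_traj: "continuous_on K (\<lambda>x::real^'n. normP (traj \<tau> x n))"
proof -
  obtain M where M: "\<forall>x. traj \<tau> (x::real^'n) n = M *v x" using traj_linear by blast
  have "continuous_on K (\<lambda>x. M *v x)" by (rule linear_continuous_on) simp
  then have "continuous_on K (normP \<circ> (\<lambda>x. M *v x))"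
    by (rule continuous_on_compose) (rule continuous_normP)
  then show ?thesis using M by (simp add: o_def)
qed

lemma contraction:
  fixes S :: "(real ^ 'n ^ 'n) set"
  assumes fin: "finite S" and ones: "\<forall>A\<in>S. A *v ones = ones"
    and nonexp: "\<forall>A\<in>S. \<forall>x. normP (A *v x) \<le> normP x"
    and oc: "only_cycle_is_node1_loop S"
  shows "\<exists>q L. 0 < q \<and> q < 1 \<and> 0 < L \<and>
     (\<forall>\<tau>. (\<forall>t. \<tau> t \<in> S) \<longrightarrow> (\<forall>(x::real^'n) s. normP (traj \<tau> x (s + L)) \<le> q * normP (traj \<tau> x s)))"
proof -
  define L where "L = card (face_node ` {G::(real^'n) set. proper_open_face G}) + 1"
  define W where "W = {ws. set ws \<subseteq> S \<and> length ws = L}"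
  define K0 where "K0 = Pset \<inter> cbox (- (2 *\<^sub>R ones)) (2 *\<^sub>R (ones::real^'n))"
  have finW: "finite W" unfolding W_def using finite_lists_length_eq[OF fin] .
  have cK0: "compact K0" unfolding K0_def
    using compact_Int_closed[OF compact_cbox polyhedron_imp_closed[OF polyhedron_Pset]] by (simp add: Int_commute)
  have "normP (0::real^'n) = 0" using normP_scale[of 0 "0::real^'n"] by simp
  then have "(0::real^'n) \<in> K0" unfolding K0_def by (simp add: Pset_def mem_box_cart ones_def)
  then have neK0: "K0 \<noteq> {}" by blast
  have "\<exists>q<1. \<forall>y\<in>K0. normP (traj (\<lambda>t. ws ! t) y L) \<le> q" if ws: "ws \<in> W" for ws
  proof -
    have wsS: "\<forall>t<L. ws ! t \<in> S" using ws unfolding W_def by auto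
    obtain z where z: "z \<in> K0" "\<forall>y\<in>K0. normP (traj (\<lambda>t. ws ! t) y L) \<le> normP (traj (\<lambda>t. ws ! t) z L)"
      using continuous_attains_sup[OF cK0 neK0 continuous_normP_traj] by blast
    have "normP z \<le> 1" using z(1) unfolding K0_def Pset_def by simp
    then have "normP (traj (\<lambda>t. ws ! t) z L) < 1" by (rule walk_contracts[OF nonexp oc L_def wsS])
    then show ?thesis using z(2) by blast
  qed
  then have "\<forall>ws\<in>W. \<exists>q. q < 1 \<and> (\<forall>y\<in>K0. normP (traj (\<lambda>t. ws ! t) y L) \<le> q)" by blast
  from bchoice[OF this] obtain qf where qf0: "\<forall>ws\<in>W. qf ws < 1 \<and> (\<forall>y\<in>K0. normP (traj (\<lambda>t. ws ! t) y L) \<le> qf ws)"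
    by blast
  have qf: "qf ws < 1 \<and> (\<forall>y\<in>K0. normP (traj (\<lambda>t. ws ! t) y L) \<le> qf ws)" if "ws \<in> W" for ws
    using qf0 that by blast
  define q where "q = Max (insert (1/2) (qf ` W))"
  have fq: "finite (insert (1/2) (qf ` W))" using finW by simp
  have "\<forall>a\<in>insert (1/2) (qf ` W). a < 1" using qf by auto
  then have q1: "q < 1" unfolding q_def using Max_less_iff[OF fq] by blast
  have q0: "1/2 \<le> q" unfolding q_def using fq by (intro Max_ge) auto
  have qfq: "qf ws \<le> q" if "ws \<in> W" for ws unfolding q_def using fq that by (intro Max_ge) auto
  have word: "normP (traj (\<lambda>t. ws ! t) y L) \<le> q * normP y" if ws: "ws \<in> W" for ws and y :: "real^'n"
  proof -
    have wsS: "\<forall>t<L. ws ! t \<in> S" using ws unfolding W_def by auto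
    then have wso: "\<forall>t<L. ws ! t *v ones = ones" using ones by auto
    define k :: 'n where "k = undefined"
    define r where "r = normP y"
    show ?thesis
    proof (cases "r = 0")
      case True
      define c where "c = y $ k"
      have n0: "normP y = 0" using True r_def by simp
      have yc: "y = c *\<^sub>R ones" unfolding c_def by (rule normP_zero_iff[THEN iffD1, OF n0])
      have "traj (\<lambda>t. ws ! t) (0 *\<^sub>R 0 + c *\<^sub>R ones) L = 0 *\<^sub>R traj (\<lambda>t. ws ! t) 0 L + c *\<^sub>R ones"
        by (rule traj_affine[OF wso])
      then have "traj (\<lambda>t. ws ! t) y L = c *\<^sub>R ones" using yc by simp
      then have "normP (traj (\<lambda>t. ws ! t) y L) = 0" using normP_ones by simp
      then show ?thesis using True r_def by simp
    next
      case False
      then have r0: "r > 0" using normP_ge0 r_def by (simp add: order_less_le)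
      define y' where "y' = (1/r) *\<^sub>R y + (- (y $ k) / r) *\<^sub>R ones"
      have "normP y' = (1/r) * normP y" unfolding y'_def using r0 by (intro normP_affine) simp
      then have ny': "normP y' = 1" using r0 r_def by simp
      have "- 2 \<le> y' $ i \<and> y' $ i \<le> 2" for i
      proof -
        have e: "y' $ i = (y $ i - y $ k) / r" unfolding y'_def ones_def by (simp add: diff_divide_distrib)
        have "y $ i - y $ k \<le> 2 * r" "y $ k - y $ i \<le> 2 * r" using diff_le_normP r_def by auto
        then show ?thesis unfolding e using r0 by (simp add: divide_le_eq le_divide_eq)
      qed
      then have "y' \<in> K0" using ny' unfolding K0_def by (simp add: Pset_def mem_box_cart ones_def)
      then have "normP (traj (\<lambda>t. ws ! t) y' L) \<le> q" using qf[OF ws] qfq[OF ws] by fastforce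
      moreover have "normP (traj (\<lambda>t. ws ! t) y' L) = (1/r) * normP (traj (\<lambda>t. ws ! t) y L)"
        unfolding y'_def traj_affine[OF wso] using r0 by (intro normP_affine) simp
      ultimately have "(1/r) * normP (traj (\<lambda>t. ws ! t) y L) \<le> q" by simp
      then show ?thesis using r0 r_def by (simp add: field_simps)
    qed
  qed
  have main: "normP (traj \<tau> x (s + L)) \<le> q * normP (traj \<tau> x s)" if \<tau>: "\<forall>t. \<tau> t \<in> S" for \<tau> and x :: "real^'n" and s
  proof -
    define ws where "ws = map (\<lambda>t. \<tau> (s + t)) [0..<L]"
    have ws: "ws \<in> W" unfolding ws_def W_def using \<tau> by auto
    have "traj \<tau> x (s + L) = traj (\<lambda>t. \<tau> (s + t)) (traj \<tau> x s) L" by (rule traj_shift)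
    also have "\<dots> = traj (\<lambda>t. ws ! t) (traj \<tau> x s) L" by (rule traj_cong) (simp add: ws_def)
    finally show ?thesis using word[OF ws] by simp
  qed
  show ?thesis using q0 q1 main by (intro exI[of _ q] exI[of _ L]) (auto simp: L_def)
qed

lemma sufficiency:
  fixes S :: "(real ^ 'n ^ 'n) set"
  assumes fin: "finite S" and ones: "\<forall>A\<in>S. A *v ones = ones"
    and nonexp: "\<forall>A\<in>S. \<forall>x. normP (A *v x) \<le> normP x"
    and oc: "only_cycle_is_node1_loop S"
    and \<tau>: "\<forall>t. \<tau> t \<in> S"
  shows "\<exists>c::real. traj \<tau> x0 \<longlonglongrightarrow> c *\<^sub>R ones"
proof -
  obtain q L where qL: "0 < q" "q < 1" "0 < L"
    and main: "\<And>(x::real^'n) s. normP (traj \<tau> x (s + L)) \<le> q * normP (traj \<tau> x s)"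
    using contraction[OF fin ones nonexp oc] \<tau> by blast
  define X where "X t = traj \<tau> x0 t" for t
  define r0 where "r0 = normP x0"
  have r0: "r0 \<ge> 0" unfolding r0_def by (rule normP_ge0)
  have h1: "normP (X (m * L)) \<le> q ^ m * r0" for m
  proof (induction m)
    case 0 then show ?case by (simp add: X_def r0_def)
  next
    case (Suc m)
    have "normP (X (Suc m * L)) = normP (traj \<tau> x0 (m * L + L))" by (simp add: X_def add.commute)
    also have "\<dots> \<le> q * normP (X (m * L))" unfolding X_def by (rule main)
    also have "\<dots> \<le> q * (q ^ m * r0)" using Suc qL by (intro mult_left_mono) auto
    finally show ?case by simp
  qed
  have anti: "normP (X t) \<le> normP (X s)" if "s \<le> t" for s t
    unfolding X_def by (rule traj_antimono[OF _ nonexp that order_refl]) (use \<tau> in auto)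
  define \<rho> where "\<rho> = root L q"
  have \<rho>0: "0 < \<rho>" unfolding \<rho>_def using qL by (simp add: real_root_gt_zero)
  have \<rho>1: "\<rho> < 1" unfolding \<rho>_def using qL by simp
  have \<rho>L: "\<rho> ^ L = q" unfolding \<rho>_def using qL real_root_pow_pos by blast
  have h3: "q ^ (t div L) \<le> \<rho> ^ t / q" for t
  proof -
    have "t \<le> L * (t div L) + L"
      using qL by (metis add_le_cancel_left div_mult_mod_eq mod_less_divisor mult.commute nat_less_le)
    then have "\<rho> ^ (L * (t div L) + L) \<le> \<rho> ^ t" using \<rho>0 \<rho>1 by (intro power_decreasing) auto
    moreover have "\<rho> ^ (L * (t div L) + L) = q ^ (t div L) * q" by (simp add: power_add power_mult \<rho>L)
    ultimately show ?thesis using qL by (simp add: le_divide_eq)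
  qed
  have B: "normP (X t) \<le> (r0 / q) * \<rho> ^ t" for t
  proof -
    have "normP (X t) \<le> normP (X ((t div L) * L))" by (rule anti) simp
    also have "\<dots> \<le> q ^ (t div L) * r0" by (rule h1)
    also have "\<dots> \<le> (\<rho> ^ t / q) * r0" using h3 r0 by (rule mult_right_mono)
    finally show ?thesis by (simp add: mult.commute)
  qed
  define C where "C = (\<Sum>A\<in>S. onorm (\<lambda>x::real^'n. A *v x))"
  have Cb: "norm (A *v y) \<le> C * norm y" if "A \<in> S" for A and y :: "real^'n"
  proof -
    have "norm (A *v y) \<le> onorm (\<lambda>x::real^'n. A *v x) * norm y" by (rule onorm) simp
    moreover have "onorm (\<lambda>x::real^'n. A *v x) \<le> C" unfolding C_def
      using fin that by (intro member_le_sum onorm_pos_le) auto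
    ultimately show ?thesis by (meson mult_right_mono norm_ge_zero order_trans)
  qed
  have C0: "C \<ge> 0" unfolding C_def by (intro sum_nonneg onorm_pos_le) simp
  define d where "d t = X (Suc t) - X t" for t
  define K where "K = (C + 1) * (2 * real CARD('n)) * (r0 / q)"
  have dB: "norm (d t) \<le> K * \<rho> ^ t" for t
  proof -
    define k :: 'n where "k = undefined"
    define c where "c = X t $ k"
    define y where "y = X t - c *\<^sub>R ones"
    have Xy: "X t = y + c *\<^sub>R ones" unfolding y_def by simp
    have AS: "\<tau> t \<in> S" using \<tau> by blast
    have "d t = \<tau> t *v X t - X t" unfolding d_def X_def by simp
    also have "\<dots> = \<tau> t *v y - y" unfolding Xy using ones AS
      by (simp add: matrix_vector_right_distrib matrix_vector_mult_scaleR)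
    finally have dy: "d t = \<tau> t *v y - y" .
    have yi: "\<bar>y $ i\<bar> \<le> 2 * normP (X t)" for i
      using diff_le_normP[of "X t" i k] diff_le_normP[of "X t" k i] unfolding y_def c_def ones_def by simp
    have "norm y \<le> (\<Sum>i\<in>UNIV. \<bar>y $ i\<bar>)" by (rule norm_le_l1_cart)
    also have "\<dots> \<le> (\<Sum>i\<in>(UNIV::'n set). 2 * normP (X t))" by (rule sum_mono) (rule yi)
    also have "\<dots> = 2 * real CARD('n) * normP (X t)" by simp
    finally have ny: "norm y \<le> 2 * real CARD('n) * normP (X t)" .
    have "norm (d t) \<le> norm (\<tau> t *v y) + norm y" unfolding dy by (rule norm_triangle_ineq4)
    also have "\<dots> \<le> C * norm y + norm y" using Cb[OF AS] by simp
    also have "\<dots> = (C + 1) * norm y" by (simp add: algebra_simps)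
    also have "\<dots> \<le> (C + 1) * (2 * real CARD('n) * normP (X t))" using ny C0 by (intro mult_left_mono) auto
    also have "\<dots> \<le> (C + 1) * (2 * real CARD('n) * ((r0 / q) * \<rho> ^ t))" using B C0
      by (intro mult_left_mono) auto
    also have "\<dots> = K * \<rho> ^ t" unfolding K_def by (simp add: mult_ac)
    finally show ?thesis .
  qed
  have sg: "summable (\<lambda>t. K * \<rho> ^ t)" using \<rho>0 \<rho>1 by (intro summable_mult summable_geometric) simp
  have "summable (\<lambda>t. norm (d t))" by (rule summable_comparison_test[OF _ sg]) (use dB in simp)
  then have sd: "summable d" by (rule summable_norm_cancel)
  have Xs: "X n = x0 + (\<Sum>t<n. d t)" for n
    unfolding d_def using sum_lessThan_telescope[of X n] by (simp add: X_def)
  define z where "z = x0 + suminf d"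
  have Xz: "X \<longlonglongrightarrow> z" unfolding z_def Xs by (intro tendsto_add tendsto_const summable_LIMSEQ[OF sd])
  have "(\<lambda>t. normP (X t)) \<longlonglongrightarrow> normP z" using isCont_tendsto_compose[OF isCont_normP Xz] .
  moreover have "(\<lambda>t. normP (X t)) \<longlonglongrightarrow> 0"
  proof (rule Lim_null_comparison)
    show "\<forall>\<^sub>F t in sequentially. norm (normP (X t)) \<le> (r0 / q) * \<rho> ^ t"
    proof (intro always_eventually allI)
      fix t
      have "norm (normP (X t)) = normP (X t)" using abs_of_nonneg[OF normP_ge0[of "X t"]] by simp
      then show "norm (normP (X t)) \<le> (r0 / q) * \<rho> ^ t" using B[of t] by simp
    qed
    show "(\<lambda>t. (r0 / q) * \<rho> ^ t) \<longlonglongrightarrow> 0" using \<rho>0 \<rho>1 by (intro tendsto_mult_right_zero LIMSEQ_power_zero) simp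
  qed
  ultimately have "normP z = 0" using LIMSEQ_unique by blast
  then have "z = (z $ undefined) *\<^sub>R ones" by (rule normP_zero_iff[THEN iffD1])
  then show ?thesis using Xz unfolding X_def by (intro exI[of _ "z $ undefined"]) (simp add: fun_eq_iff)
qed

theorem theorem1:
  fixes S :: "(real ^ 'n ^ 'n) set"
  assumes "CARD('n) \<ge> 2"
    and "finite S"
    and "\<forall>A\<in>S. A *v ones = ones"
    and "\<forall>A\<in>S. \<forall>x. normP (A *v x) \<le> normP x"
  shows "(\<forall>x0 \<sigma>. (\<forall>t. \<sigma> t \<in> S) \<longrightarrow> (\<exists>c::real. traj \<sigma> x0 \<longlonglongrightarrow> c *\<^sub>R ones))
         \<longleftrightarrow> only_cycle_is_node1_loop S"
proof
  assume "\<forall>x0 \<sigma>. (\<forall>t. \<sigma> t \<in> S) \<longrightarrow> (\<exists>c::real. traj \<sigma> x0 \<longlonglongrightarrow> c *\<^sub>R ones)"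
  then show "only_cycle_is_node1_loop S" by (rule necessity)
next
  assume oc: "only_cycle_is_node1_loop S"
  show "\<forall>x0 \<sigma>. (\<forall>t. \<sigma> t \<in> S) \<longrightarrow> (\<exists>c::real. traj \<sigma> x0 \<longlonglongrightarrow> c *\<^sub>R ones)"
    using sufficiency[OF assms(2,3,4) oc] by blast
qed

end
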